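(* Let $(R,B)$ be an EIC problem with problem graph $G=(V,E)$, and let $\mathcal{A}_{(R,B)}$ be the image of its column repetition function. Then $$\omega(\overline{G})\le \mathrm{minrk}_2(G)\le \mathrm{rminrk}_2(G,\mathcal{A}_{(R,B)})\le \chi(\overline{G}).$$
   Context: An EIC problem is a pair $(R,B)$ of matrices in $\mathbb{F}_2^{n\times m}$ with disjoint supports (node $u$ needs block $a$ iff $R_{ua}=1$, has block $a$ iff $B_{ua}=1$). Requirement pairs: $P=\{(u,a):R_{ua}=1\}$. The problem graph $G=(V,E)$ is the directed graph with vertices $V=\{v_{(u,a)}:(u,a)\in P\}$ and an edge from $v_{(u,a)}$ to $v_{(w,b)}$ (for distinct vertices) iff $B_{ub}=1$ or $a=b$. A matrix $A'\in\mathbb{F}_2^{|V|\times|V|}$ (indexed by $V$) fits $G$ if all diagonal entries are $1$ and $A'_{xy}=0$ whenever $x\neq y$, $(x,y)\notin E$. $\mathrm{minrk}_2(G)$ is the minimum rank over $\mathbb{F}_2$ of a matrix fitting $G$. The column repetition function $\phi_{(R,B)}:\mathbb{F}_2^{|V|\times m}\to\mathbb{F}_2^{|V|\times|V|}$ sends $A$ (rows indexed by $V$) to the matrix whose column indexed by $v_{(u,a)}$ is the $a$-th column of $A$; $\mathcal{A}_{(R,B)}$ is its image, and $\mathrm{rminrk}_2(G,\mathcal{A}_{(R,B)})$ is the minimum rank of a matrix in $\mathcal{A}_{(R,B)}$ fitting $G$. For a directed graph $H$ (loops disregarded): its complement $\overline H$ has an edge $(x,y)$, $x\ne y$, iff $(x,y)$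 is not an edge of $H$; a clique is a vertex set in which every ordered pair of distinct vertices is an edge; $\omega(H)$ is the maximum clique size; an independent set is a vertex set containing no edge in either direction; $\chi(H)$ is the minimum number of parts in a partition of the vertices into independent sets. *)

theory Defs
  imports "HOL-Library.Z2" "HOL-Library.Disjoint_Sets" "HOL-Library.Product_Lexorder" "Jordan_Normal_Form.DL_Rank"
begin

text \<open>F_2 is the field type bit. Matrices are Jordan_Normal_Form matrices over bit;
 rows of R, B are nodes u < n, columns are blocks a < m.\<close>

definition eic_problem :: "bit mat \<Rightarrow> bit mat \<Rightarrow> nat \<Rightarrow> nat \<Rightarrow> bool" where
  "eic_problem R B n m \<longleftrightarrow> R \<in> carrier_mat n m \<and> B \<in> carrier_mat n m \<and>
     (\<forall>u<n. \<forall>a<m. \<not> (R $$ (u,a) = 1 \<and> B $$ (u,a) = 1))"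

definition req_pairs :: "bit mat \<Rightarrow> (nat \<times> nat) set" where
  "req_pairs R = {(u,a). u < dim_row R \<and> a < dim_col R \<and> R $$ (u,a) = 1}"

definition pg_edge :: "bit mat \<Rightarrow> (nat \<times> nat) \<Rightarrow> (nat \<times> nat) \<Rightarrow> bool" where
  "pg_edge B x y \<longleftrightarrow> x \<noteq> y \<and> (B $$ (fst x, snd y) = 1 \<or> snd x = snd y)"

text \<open>A fixed enumeration of V, used to index |V| x |V| matrices: index i < |V|
  corresponds to vertex (vlist R ! i).\<close>
definition vlist :: "bit mat \<Rightarrow> (nat \<times> nat) list" where
  "vlist R = sorted_list_of_set (req_pairs R)"

definition fits :: "bit mat \<Rightarrow> bit mat \<Rightarrow> bit mat \<Rightarrow> bool" where
  "fits R B A' \<longleftrightarrow> (let N = card (req_pairs R); vs = vlist R in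
     A' \<in> carrier_mat N N \<and> (\<forall>i<N. A' $$ (i,i) = 1) \<and>
     (\<forall>i<N. \<forall>j<N. i \<noteq> j \<and> \<not> pg_edge B (vs ! i) (vs ! j) \<longrightarrow> A' $$ (i,j) = 0))"

definition rank2 :: "bit mat \<Rightarrow> nat" where
  "rank2 A = vec_space.rank (dim_row A) A"

definition minrk2 :: "bit mat \<Rightarrow> bit mat \<Rightarrow> nat" where
  "minrk2 R B = (LEAST r. \<exists>A'. fits R B A' \<and> rank2 A' = r)"

definition col_rep :: "bit mat \<Rightarrow> bit mat \<Rightarrow> bit mat" where
  "col_rep R A = (let N = card (req_pairs R); vs = vlist R in
     mat N N (\<lambda>(i,j). A $$ (i, snd (vs ! j))))"

definition col_rep_image :: "bit mat \<Rightarrow> bit mat set" where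
  "col_rep_image R = col_rep R ` carrier_mat (card (req_pairs R)) (dim_col R)"

definition rminrk2 :: "bit mat \<Rightarrow> bit mat \<Rightarrow> bit mat set \<Rightarrow> nat" where
  "rminrk2 R B \<A> = (LEAST r. \<exists>A'\<in>\<A>. fits R B A' \<and> rank2 A' = r)"

text \<open>Generic directed graphs given by a vertex set and an edge relation (loops disregarded).\<close>
definition dg_compl :: "('v \<Rightarrow> 'v \<Rightarrow> bool) \<Rightarrow> 'v \<Rightarrow> 'v \<Rightarrow> bool" where
  "dg_compl E x y \<longleftrightarrow> x \<noteq> y \<and> \<not> E x y"

definition dg_clique :: "('v \<Rightarrow> 'v \<Rightarrow> bool) \<Rightarrow> 'v set \<Rightarrow> bool" where
  "dg_clique E S \<longleftrightarrow> (\<forall>x\<in>S. \<forall>y\<in>S. x \<noteq> y \<longrightarrow> E x y)"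

definition dg_omega :: "'v set \<Rightarrow> ('v \<Rightarrow> 'v \<Rightarrow> bool) \<Rightarrow> nat" where
  "dg_omega V E = Max {card S | S. S \<subseteq> V \<and> dg_clique E S}"

definition dg_indep :: "('v \<Rightarrow> 'v \<Rightarrow> bool) \<Rightarrow> 'v set \<Rightarrow> bool" where
  "dg_indep E S \<longleftrightarrow> (\<forall>x\<in>S. \<forall>y\<in>S. x \<noteq> y \<longrightarrow> \<not> E x y)"

definition dg_chi :: "'v set \<Rightarrow> ('v \<Rightarrow> 'v \<Rightarrow> bool) \<Rightarrow> nat" where
  "dg_chi V E = (LEAST k. \<exists>Q. partition_on V Q \<and> card Q = k \<and> (\<forall>S\<in>Q. dg_indep E S))"

end

theory Submission
  imports Defs "Jordan_Normal_Form.DL_Rank_Submatrix"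
begin
lemma rank_sum_le:
  fixes f g :: "'b \<Rightarrow> nat \<Rightarrow> 'a::field"
  assumes "finite Q"
  shows "vec_space.rank n (mat n nc (\<lambda>(r,c). \<Sum>S\<in>Q. f S r * g S c)) \<le> card Q"
  using assms
proof (induction Q rule: finite_induct)
  case empty
  have eq0: "mat n nc (\<lambda>(r,c). \<Sum>S\<in>{}. f S r * g S c) = (0\<^sub>m n nc :: 'a mat)"
    by (rule eq_matI) auto
  show ?case unfolding eq0 vec_space.rank_0I by simp
next
  case (insert x Q)
  have eq: "mat n nc (\<lambda>(r,c). \<Sum>S\<in>insert x Q. f S r * g S c)
     = mat n nc (\<lambda>(r,c). f x r * g x c) + mat n nc (\<lambda>(r,c). \<Sum>S\<in>Q. f S r * g S c)"
    by (rule eq_matI) (use insert in auto)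
  have "vec_space.rank n (mat n nc (\<lambda>(r,c). f x r * g x c)) \<le> 1"
    by (rule vec_space.rank_le_1_product_entries[where nc=nc and f="f x" and g="g x"]) auto
  moreover have "vec_space.rank n (mat n nc (\<lambda>(r,c). \<Sum>S\<in>insert x Q. f S r * g S c))
     \<le> vec_space.rank n (mat n nc (\<lambda>(r,c). f x r * g x c)) + vec_space.rank n (mat n nc (\<lambda>(r,c). \<Sum>S\<in>Q. f S r * g S c))"
    unfolding eq by (rule vec_space.rank_subadditive) auto
  ultimately show ?case using insert by simp
qed

lemma vfin: "finite (req_pairs R)"
proof -
  have "req_pairs R \<subseteq> {..<dim_row R} \<times> {..<dim_col R}" unfolding req_pairs_def by auto
  then show ?thesis by (rule finite_subset) auto
qed

lemma vlist_props: "set (vlist R) = req_pairs R" "distinct (vlist R)" "length (vlist R) = card (req_pairs R)"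
  unfolding vlist_def using vfin[of R] by (auto simp: distinct_card[symmetric])

lemma lower:
  assumes fit: "fits R B A'" and SV: "S \<subseteq> req_pairs R"
    and cl: "dg_clique (dg_compl (pg_edge B)) S"
  shows "card S \<le> rank2 A'"
proof -
  define N where "N = card (req_pairs R)"
  define vs where "vs = vlist R"
  have A': "A' \<in> carrier_mat N N" and diag: "\<And>i. i<N \<Longrightarrow> A' $$ (i,i) = 1"
    and off: "\<And>i j. i<N \<Longrightarrow> j<N \<Longrightarrow> i \<noteq> j \<Longrightarrow> \<not> pg_edge B (vs ! i) (vs ! j) \<Longrightarrow> A' $$ (i,j) = 0"
    using fit unfolding fits_def Let_def N_def vs_def by auto
  have len: "length vs = N" and dist: "distinct vs" and setv: "set vs = req_pairs R"
    using vlist_props[of R] unfolding vs_def N_def by auto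
  define I where "I = {i. i<N \<and> vs ! i \<in> S}"
  have finI: "finite I" unfolding I_def by auto
  have "S = (\<lambda>i. vs ! i) ` I"
  proof
    show "S \<subseteq> (\<lambda>i. vs ! i) ` I"
    proof
      fix x assume "x \<in> S"
      then have "x \<in> set vs" using SV setv by auto
      then obtain i where "i < N" "vs ! i = x" using len by (auto simp: in_set_conv_nth)
      then show "x \<in> (\<lambda>i. vs ! i) ` I" unfolding I_def using \<open>x \<in> S\<close> by auto
    qed
  qed (auto simp: I_def)
  moreover have "inj_on (\<lambda>i. vs ! i) I"
    using dist len unfolding I_def inj_on_def by (auto simp: nth_eq_iff_index_eq)
  ultimately have cardS: "card S = card I" by (simp add: card_image)
  have cI: "{i. i < N \<and> i \<in> I} = I" unfolding I_def by auto
  have sub: "submatrix A' I I = 1\<^sub>m (card I)"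
  proof (rule eq_matI)
    show "dim_row (submatrix A' I I) = dim_row (1\<^sub>m (card I))"
      using A' cI by (simp add: dim_submatrix)
    show "dim_col (submatrix A' I I) = dim_col (1\<^sub>m (card I))"
      using A' cI by (simp add: dim_submatrix)
    fix i j assume i: "i < dim_row (1\<^sub>m (card I))" and j: "j < dim_col (1\<^sub>m (card I))"
    then have i': "i < card I" and j': "j < card I" by auto
    have pi: "pick I i \<in> I" and pj: "pick I j \<in> I" using pick_in_set i' j' by auto
    have "submatrix A' I I $$ (i,j) = A' $$ (pick I i, pick I j)"
      unfolding submatrix_def using A' cI i' j' by simp
    also have "\<dots> = 1\<^sub>m (card I) $$ (i,j)"
    proof (cases "i = j")
      case True then show ?thesis using diag pi i' unfolding I_def by simp
    next
      case False
      have "pick I i < pick I j \<or> pick I j < pick I i"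
        using False i' j' pick_mono by (meson linorder_neqE_nat)
      then have ne: "pick I i \<noteq> pick I j" by auto
      then have "vs ! pick I i \<noteq> vs ! pick I j" using dist len pi pj unfolding I_def
        by (auto simp: nth_eq_iff_index_eq)
      then have "\<not> pg_edge B (vs ! pick I i) (vs ! pick I j)"
        using cl pi pj unfolding I_def dg_clique_def dg_compl_def by auto
      then show ?thesis using off ne pi pj False i' j' unfolding I_def by simp
    qed
    finally show "submatrix A' I I $$ (i,j) = 1\<^sub>m (card I) $$ (i,j)" .
  qed
  have "card {j. j < N \<and> j \<in> I} \<le> vec_space.rank N A'"
    by (rule vec_space.rank_gt_minor[OF A', of I I]) (simp add: sub det_one)
  then show ?thesis unfolding rank2_def cardS using A' cI by simp
qed
lemma upper:
  assumes dims: "dim_col R = m"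
    and part: "partition_on (req_pairs R) Q"
    and ind: "\<forall>S\<in>Q. dg_indep (dg_compl (pg_edge B)) S"
  shows "\<exists>A'\<in>col_rep_image R. fits R B A' \<and> rank2 A' \<le> card Q"
proof -
  define N where "N = card (req_pairs R)"
  define vs where "vs = vlist R"
  have len: "length vs = N" and dist: "distinct vs" and setv: "set vs = req_pairs R"
    using vlist_props[of R] unfolding vs_def N_def by auto
  have finQ: "finite Q" using finite_elements[OF vfin part] .
  define f :: "(nat \<times> nat) set \<Rightarrow> nat \<Rightarrow> bit" where "f S r = (if vs ! r \<in> S then 1 else 0)" for S r
  define g :: "(nat \<times> nat) set \<Rightarrow> nat \<Rightarrow> bit" where "g S c = (if snd (vs ! c) \<in> snd ` S then 1 else 0)" for S c
  define A :: "bit mat" where "A = mat N m (\<lambda>(i,b). \<Sum>S\<in>Q. f S i * (if b \<in> snd ` S then 1 else 0))"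
  have Acar: "A \<in> carrier_mat N (dim_col R)" unfolding A_def dims by simp
  have sndlt: "snd (vs ! c) < m" if "c < N" for c
  proof -
    have "vs ! c \<in> req_pairs R" using that len setv nth_mem by metis
    then show ?thesis unfolding req_pairs_def dims[symmetric] by auto
  qed
  define A' where "A' = col_rep R A"
  have A'eq: "A' = mat N N (\<lambda>(r,c). \<Sum>S\<in>Q. f S r * g S c)"
    unfolding A'_def col_rep_def Let_def N_def[symmetric] vs_def[symmetric]
  proof (rule eq_matI)
    fix i j assume "i < dim_row (mat N N (\<lambda>(r,c). \<Sum>S\<in>Q. f S r * g S c))"
      and "j < dim_col (mat N N (\<lambda>(r,c). \<Sum>S\<in>Q. f S r * g S c))"
    then have i: "i < N" and j: "j < N" by auto
    have "mat N N (\<lambda>(i, j). A $$ (i, snd (vs ! j))) $$ (i, j) = A $$ (i, snd (vs ! j))"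
      by (simp only: index_mat(1)[OF i j] case_prod_conv)
    also have "\<dots> = (\<Sum>S\<in>Q. f S i * g S j)"
      by (simp only: A_def index_mat(1)[OF i sndlt[OF j]] case_prod_conv g_def)
    also have "\<dots> = mat N N (\<lambda>(r,c). \<Sum>S\<in>Q. f S r * g S c) $$ (i, j)"
      by (simp only: index_mat(1)[OF i j] case_prod_conv)
    finally show "mat N N (\<lambda>(i, j). A $$ (i, snd (vs ! j))) $$ (i, j) = mat N N (\<lambda>(r,c). \<Sum>S\<in>Q. f S r * g S c) $$ (i, j)" .
  qed auto
  have inimg: "A' \<in> col_rep_image R" unfolding col_rep_image_def A'_def using Acar N_def by blast
  have rk: "rank2 A' \<le> card Q"
    unfolding rank2_def A'eq using rank_sum_le[OF finQ, of N N f g] by simp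
  have fitsA: "fits R B A'"
    unfolding fits_def Let_def N_def[symmetric] vs_def[symmetric]
  proof (intro conjI allI impI)
    show "A' \<in> carrier_mat N N" unfolding A'eq by simp
  next
    fix i assume i: "i < N"
    have vin: "vs ! i \<in> req_pairs R" using i len setv nth_mem by metis
    then obtain S0 where S0: "S0 \<in> Q" "vs ! i \<in> S0" using partition_onD1[OF part] by auto
    have uniq: "S = S0" if "S \<in> Q" "vs ! i \<in> S" for S
      using partition_onD2[OF part] S0 that unfolding disjoint_def by blast
    have "A' $$ (i,i) = (\<Sum>S\<in>Q. f S i * g S i)" unfolding A'eq using i by simp
    also have "\<dots> = (\<Sum>S\<in>Q. if S = S0 then 1 else 0)"
    proof (rule sum.cong)
      fix S assume SQ: "S \<in> Q"
      show "f S i * g S i = (if S = S0 then 1 else 0)"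
      proof (cases "S = S0")
        case True
        then have "f S i = 1" "g S i = 1" using S0(2) unfolding f_def g_def by auto
        then show ?thesis using True by simp
      next
        case False
        then have "vs ! i \<notin> S" using uniq SQ by blast
        then have "f S i = 0" unfolding f_def by simp
        then show ?thesis using False by simp
      qed
    qed simp
    also have "\<dots> = 1" using S0 finQ by simp
    finally show "A' $$ (i,i) = 1" .
  next
    fix i j assume i: "i < N" and j: "j < N" and h: "i \<noteq> j \<and> \<not> pg_edge B (vs ! i) (vs ! j)"
    have neq: "vs ! i \<noteq> vs ! j" using h i j dist len by (auto simp: nth_eq_iff_index_eq)
    have "f S i * g S j = 0" if "S \<in> Q" for S
    proof (rule ccontr)
      assume "f S i * g S j \<noteq> 0"
      then have vi: "vs ! i \<in> S" and "snd (vs ! j) \<in> snd ` S" unfolding f_def g_def by (auto split: if_splits)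
      then obtain z where z: "z \<in> S" "snd z = snd (vs ! j)" by auto
      have "B $$ (fst (vs ! i), snd z) = 1 \<or> snd (vs ! i) = snd z"
      proof (cases "z = vs ! i")
        case True then show ?thesis by simp
      next
        case False
        then have "pg_edge B (vs ! i) z" using ind that vi z(1)
          unfolding dg_indep_def dg_compl_def by metis
        then show ?thesis unfolding pg_edge_def by simp
      qed
      then have "pg_edge B (vs ! i) (vs ! j)" using neq z(2) unfolding pg_edge_def by simp
      then show False using h by simp
    qed
    then show "A' $$ (i,j) = 0" unfolding A'eq using i j by simp
  qed
  show ?thesis using inimg fitsA rk by blast
qed

theorem corollary1:
  fixes R B :: "bit mat" and n m :: nat
  assumes "eic_problem R B n m"
  shows "dg_omega (req_pairs R) (dg_compl (pg_edge B)) \<le> minrk2 R B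
    \<and> minrk2 R B \<le> rminrk2 R B (col_rep_image R)
    \<and> rminrk2 R B (col_rep_image R) \<le> dg_chi (req_pairs R) (dg_compl (pg_edge B))"
proof -
  define V where "V = req_pairs R"
  define N where "N = card V"
  have finV: "finite V" unfolding V_def by (rule vfin)
  have dc: "dim_col R = m" using assms unfolding eic_problem_def by auto
  have fit1: "fits R B (1\<^sub>m N)" unfolding fits_def Let_def N_def V_def by auto
  have "\<exists>A'. fits R B A' \<and> rank2 A' = minrk2 R B"
    unfolding minrk2_def by (rule LeastI_ex) (use fit1 in blast)
  then obtain A0 where A0: "fits R B A0" "rank2 A0 = minrk2 R B" by blast
  have om: "dg_omega V (dg_compl (pg_edge B)) \<le> minrk2 R B"
    unfolding dg_omega_def
  proof (rule Max.boundedI)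
    show "finite {card S |S. S \<subseteq> V \<and> dg_clique (dg_compl (pg_edge B)) S}"
      by (rule finite_subset[of _ "card ` Pow V"]) (use finV in auto)
    show "{card S |S. S \<subseteq> V \<and> dg_clique (dg_compl (pg_edge B)) S} \<noteq> {}"
      using dg_clique_def[of _ "{}"] by auto
  next
    fix a assume "a \<in> {card S |S. S \<subseteq> V \<and> dg_clique (dg_compl (pg_edge B)) S}"
    then obtain S where "a = card S" "S \<subseteq> V" "dg_clique (dg_compl (pg_edge B)) S" by auto
    then show "a \<le> minrk2 R B" using lower[OF A0(1)] A0(2) unfolding V_def by auto
  qed
  have "\<exists>Q. partition_on V Q \<and> card Q = dg_chi V (dg_compl (pg_edge B)) \<and> (\<forall>S\<in>Q. dg_indep (dg_compl (pg_edge B)) S)"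
    unfolding dg_chi_def
  proof (rule LeastI_ex)
    show "\<exists>x Q. partition_on V Q \<and> card Q = x \<and> (\<forall>S\<in>Q. dg_indep (dg_compl (pg_edge B)) S)"
      using partition_on_singletons[of V] unfolding dg_indep_def by blast
  qed
  then obtain Q where Q: "partition_on V Q" "card Q = dg_chi V (dg_compl (pg_edge B))"
    "\<forall>S\<in>Q. dg_indep (dg_compl (pg_edge B)) S" by blast
  obtain A1 where A1: "A1 \<in> col_rep_image R" "fits R B A1" "rank2 A1 \<le> card Q"
    using upper[OF dc Q(1)[unfolded V_def] Q(3)] by blast
  have "\<exists>A'\<in>col_rep_image R. fits R B A' \<and> rank2 A' = rminrk2 R B (col_rep_image R)"
    unfolding rminrk2_def by (rule LeastI_ex) (use A1 in blast)
  then obtain A2 where A2: "A2 \<in> col_rep_image R" "fits R B A2" "rank2 A2 = rminrk2 R B (col_rep_image R)" by blast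
  have le1: "minrk2 R B \<le> rminrk2 R B (col_rep_image R)"
    unfolding minrk2_def using A2 by (metis (mono_tags, lifting) Least_le)
  have le2: "rminrk2 R B (col_rep_image R) \<le> rank2 A1"
    unfolding rminrk2_def using A1 by (metis (mono_tags, lifting) Least_le)
  show ?thesis using om le1 le2 A1(3) Q(2) unfolding V_def by simp
qed
end
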